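(* For $p=1$, the eigenvalues of the boundary-cell operator $M^{-1}(K^s-K^R+K^{SB})$ are $$\lambda_{\pm}(d)=3d-2\pm\sqrt{9d^2-12d-2},$$ while those of the interior-cell operator $M^{-1}(K^s-K^R)$ are $-2\pm\sqrt{2}\,i$. Moreover, for $d\in[-1,1]$, both $\lambda_+(d)$ and $\lambda_-(d)$ have strictly negative real part if and only if $d<2/3$.
   Context: Setting: the linear advection equation $\partial_t u+\partial_x u=s(x)$ (velocity $1$) with a Dirichlet condition $u=u_D$ at the left physical boundary $\bar x$. Uniform mesh of cells $\Omega_e=[x_{e-1/2},x_{e+1/2}]$, $e=1,\dots,N$, with $x_{1/2}=0$ and cell size $\Delta x=1$. On each cell the approximation space is $\mathbb{P}^p(\Omega_e)$ with basis $\{\phi^e_j\}_{j=0}^p$, where $\phi^e_j(x)=\phi_j(x-(e-1))$ are translates of a fixed basis $\{\phi_j\}$ of $\mathbb{P}^p$ on $[0,1]$. Local matrices (indices $i,j=0,\dots,p$, identical for all cells by translation): mass $M_{ij}=\int_{\Omega_e}\phi^e_i\phi^e_j\,dx$; stiffness $K^s_{ij}=\int_{\Omega_e}\partial_x\phi^e_i\,\phi^e_j\,dx$; right interface $K^R_{ij}=\phi^e_i(x_{e+1/2})\phi^e_j(x_{e+1/2})$. The physical boundary is at $\bar x = x_{1/2}+d$, with $d\in[-1,1]$ ($d<0$: outside the first cell, $d>0$: inside). Shifted boundary polynomial correction with homogeneous data $u_D=0$: the upwind flux at $x_{1/2}$ is $u^\star=-\bigl(u_h(x_{1/2}+d)-u_h(x_{1/2})\bigr)$,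 with $u_h$ the (polynomially extended) solution of cell 1, giving the matrix $K^{SB}_{ij}=-\phi^1_i(x_{1/2})\bigl(\phi^1_j(x_{1/2}+d)-\phi^1_j(x_{1/2})\bigr)$. The square root denotes any complex square root (the pair $\lambda_\pm$ is independent of the choice). *)

theory Defs
  imports "HOL-Analysis.Analysis" "HOL-Computational_Algebra.Polynomial"
begin

text \<open>Degree p = 1. Cell 1 is [0,1] (x_{1/2} = 0, Delta x = 1); by translation all local
  matrices coincide with those of cell 1, whose basis is phi_j itself.\<close>

definition is_P1_basis :: "(2 \<Rightarrow> real poly) \<Rightarrow> bool" where
  "is_P1_basis \<phi> \<longleftrightarrow>
     (\<forall>i. degree (\<phi> i) \<le> 1) \<and>
     (\<forall>c::2 \<Rightarrow> real. (\<Sum>i\<in>UNIV. smult (c i) (\<phi> i)) = 0 \<longrightarrow> (\<forall>i. c i = 0)) \<and>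
     (\<forall>q::real poly. degree q \<le> 1 \<longrightarrow> (\<exists>c::2 \<Rightarrow> real. q = (\<Sum>i\<in>UNIV. smult (c i) (\<phi> i))))"

definition mass_mat :: "(2 \<Rightarrow> real poly) \<Rightarrow> real^2^2" where
  "mass_mat \<phi> = (\<chi> i j. integral {0..1} (\<lambda>x. poly (\<phi> i) x * poly (\<phi> j) x))"

definition stiff_mat :: "(2 \<Rightarrow> real poly) \<Rightarrow> real^2^2" where
  "stiff_mat \<phi> = (\<chi> i j. integral {0..1} (\<lambda>x. poly (pderiv (\<phi> i)) x * poly (\<phi> j) x))"

definition right_mat :: "(2 \<Rightarrow> real poly) \<Rightarrow> real^2^2" where
  "right_mat \<phi> = (\<chi> i j. poly (\<phi> i) 1 * poly (\<phi> j) 1)"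

definition sb_mat :: "(2 \<Rightarrow> real poly) \<Rightarrow> real \<Rightarrow> real^2^2" where
  "sb_mat \<phi> d = (\<chi> i j. - poly (\<phi> i) 0 * (poly (\<phi> j) d - poly (\<phi> j) 0))"

definition complex_eigenvalues :: "real^'n^'n \<Rightarrow> complex set" where
  "complex_eigenvalues A = {z. det (mat z - (\<chi> i j. complex_of_real (A $ i $ j))) = 0}"

definition lam_plus :: "real \<Rightarrow> complex" where
  "lam_plus d = complex_of_real (3*d - 2) + csqrt (complex_of_real (9*d^2 - 12*d - 2))"

definition lam_minus :: "real \<Rightarrow> complex" where
  "lam_minus d = complex_of_real (3*d - 2) - csqrt (complex_of_real (9*d^2 - 12*d - 2))"

end

theory Submission
  imports Defs
begin


lemma int_quad: "integral {0..1} (\<lambda>x::real. A + B*x + C*x^2) = A + B/2 + C/3"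
proof -
  have "((\<lambda>x::real. A + B*x + C*x^2) has_integral
        ((\<lambda>x. A*x + B*x^2/2 + C*x^3/3) 1 - (\<lambda>x. A*x + B*x^2/2 + C*x^3/3) 0)) {0..1}"
    by (rule fundamental_theorem_of_calculus)
       (auto simp flip: has_real_derivative_iff_has_vector_derivative intro!: derivative_eq_intros simp: algebra_simps power2_eq_square)
  then show ?thesis by (simp add: integral_unique)
qed

lemma deg1: "degree (p::real poly) \<le> 1 \<Longrightarrow> p = [:coeff p 0, coeff p 1:]"
  by (rule poly_eqI) (auto simp: coeff_pCons split: nat.split intro: coeff_eq_0)

lemma inv_unique2: "(A::'a::comm_ring_1^'n^'n) ** B = mat 1 \<Longrightarrow> B ** A = mat 1 \<Longrightarrow> matrix_inv A = B"
proof -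
  assume h: "A ** B = mat 1" "B ** A = mat 1"
  let ?P = "\<lambda>A'. A ** A' = mat 1 \<and> A' ** A = mat 1"
  have "?P (matrix_inv A)" unfolding matrix_inv_def by (rule someI[of ?P B]) (use h in auto)
  then have "B = B ** (A ** matrix_inv A)" by (simp add: matrix_mul_rid)
  also have "\<dots> = matrix_inv A" by (simp add: matrix_mul_assoc h matrix_mul_lid)
  finally show ?thesis by simp
qed

lemma inv2: "det (M::real^2^2) \<noteq> 0 \<Longrightarrow> matrix_inv M =
   (\<chi> i j. (if i = 1 then (if j = 1 then M$2$2 else - M$1$2) else (if j = 1 then - M$2$1 else M$1$1)) / det M)"
  apply (rule inv_unique2)
  apply (auto simp: vec_eq_iff forall_2 matrix_matrix_mult_def sum_2 mat_def det_2 divide_simps)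
  done

lemma eig2: "complex_eigenvalues (B::real^2^2) =
  {z. z^2 - z * of_real (B$1$1 + B$2$2) + of_real (B$1$1*B$2$2 - B$1$2*B$2$1) = 0}"
  unfolding complex_eigenvalues_def det_2
  by (simp add: mat_def algebra_simps power2_eq_square)


lemma key2: fixes M A :: "real^2^2" assumes "det M \<noteq> 0"
  shows "(matrix_inv M ** A)$1$1 + (matrix_inv M ** A)$2$2 =
     (M$2$2 * A$1$1 - M$1$2 * A$2$1 + M$1$1 * A$2$2 - M$2$1 * A$1$2) / det M"
   and "(matrix_inv M ** A)$1$1 * (matrix_inv M ** A)$2$2 - (matrix_inv M ** A)$1$2 * (matrix_inv M ** A)$2$1
       = det A / det M"
proof -
  define \<delta> where "\<delta> = det M"
  have d: "\<delta> \<noteq> 0" using assms \<delta>_def by simp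
  have e: "(matrix_inv M ** A)$1$1 = (M$2$2*A$1$1 - M$1$2*A$2$1)/\<delta>"
     "(matrix_inv M ** A)$1$2 = (M$2$2*A$1$2 - M$1$2*A$2$2)/\<delta>"
     "(matrix_inv M ** A)$2$1 = (M$1$1*A$2$1 - M$2$1*A$1$1)/\<delta>"
     "(matrix_inv M ** A)$2$2 = (M$1$1*A$2$2 - M$2$1*A$1$2)/\<delta>"
    unfolding inv2[OF assms] \<delta>_def[symmetric]
    by (simp_all add: matrix_matrix_mult_def sum_2 diff_divide_distrib)
  show "(matrix_inv M ** A)$1$1 + (matrix_inv M ** A)$2$2 =
     (M$2$2 * A$1$1 - M$1$2 * A$2$1 + M$1$1 * A$2$2 - M$2$1 * A$1$2) / det M"
    unfolding e \<delta>_def[symmetric] by (simp add: add_divide_distrib diff_divide_distrib)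
  have n: "(M$2$2*A$1$1 - M$1$2*A$2$1) * (M$1$1*A$2$2 - M$2$1*A$1$2) - (M$2$2*A$1$2 - M$1$2*A$2$2) * (M$1$1*A$2$1 - M$2$1*A$1$1)
     = \<delta> * det A"
    unfolding \<delta>_def det_2 by algebra
  show "(matrix_inv M ** A)$1$1 * (matrix_inv M ** A)$2$2 - (matrix_inv M ** A)$1$2 * (matrix_inv M ** A)$2$1
       = det A / det M"
    unfolding e \<delta>_def[symmetric] using d n
    by (simp add: divide_simps power2_eq_square)
qed

lemma roots_quad: "(z^2 - z * complex_of_real (6*d-4) + 6 = 0) \<longleftrightarrow> (z = lam_plus d \<or> z = lam_minus d)"
proof -
  define wv where "wv = complex_of_real (9*d^2 - 12*d - 2)"
  define sv where "sv = complex_of_real (3*d - 2)"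
  have rr: "csqrt wv * csqrt wv = wv" using power2_csqrt[of wv] by (simp add: power2_eq_square)
  have g: "(z - (sv + csqrt wv)) * (z - (sv - csqrt wv)) = z^2 - 2 * sv * z + sv * sv - (csqrt wv) * (csqrt wv)"
    by (simp add: algebra_simps power2_eq_square)
  have "sv * sv - wv = 6" unfolding sv_def wv_def
    by (simp add: power2_eq_square algebra_simps flip: of_real_mult of_real_diff)
  then have "z^2 - z * complex_of_real (6*d-4) + 6 = (z - lam_plus d) * (z - lam_minus d)"
    unfolding lam_plus_def lam_minus_def sv_def[symmetric] wv_def[symmetric] g rr
    by (simp add: sv_def algebra_simps)
  then show ?thesis by simp
qed

lemma roots_int: "(z^2 - z * complex_of_real (-4) + 6 = 0) \<longleftrightarrow>
   (z = -2 + complex_of_real (sqrt 2) * \<i> \<or> z = -2 - complex_of_real (sqrt 2) * \<i>)"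
proof -
  have s: "complex_of_real (sqrt 2) * complex_of_real (sqrt 2) = 2"
  proof -
    have "sqrt 2 * sqrt 2 = (2::real)" by simp
    then have "complex_of_real (sqrt 2 * sqrt 2) = complex_of_real 2" by (rule arg_cong)
    then show ?thesis by (simp only: of_real_mult of_real_numeral)
  qed
  have g: "(z - (-2 + r * \<i>)) * (z - (-2 - r * \<i>)) = z^2 + 4*z + 4 + r*r" for r
    by (simp add: algebra_simps power2_eq_square)
  have "z^2 - z * complex_of_real (-4) + 6 = (z - (-2 + complex_of_real (sqrt 2) * \<i>)) * (z - (-2 - complex_of_real (sqrt 2) * \<i>))"
    unfolding g s by simp
  then show ?thesis by simp
qed


lemma stab: assumes "d \<in> {-1..1::real}"
  shows "(Re (lam_plus d) < 0 \<and> Re (lam_minus d) < 0) \<longleftrightarrow> d < 2/3"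
proof (cases "9*d^2 - 12*d - 2 \<ge> 0")
  case True
  define D where "D = 9*d^2 - 12*d - 2"
  have D0: "D \<ge> 0" using True D_def by simp
  have dneg: "d < 0"
  proof (rule ccontr)
    assume "\<not> d < 0"
    then have "3*d*(3*d-4) \<le> 0" using assms by (intro mult_nonneg_nonpos) auto
    then show False using True by (simp add: power2_eq_square algebra_simps)
  qed
  have lt: "D < (2 - 3*d)^2" unfolding D_def by (simp add: power2_eq_square algebra_simps)
  have "sqrt D < 2 - 3*d"
    using real_sqrt_less_mono[OF lt] dneg by simp
  moreover have "Re (lam_plus d) = 3*d - 2 + sqrt D" "Re (lam_minus d) = 3*d - 2 - sqrt D"
    unfolding lam_plus_def lam_minus_def D_def[symmetric] using D0 by (simp_all add: csqrt_of_real)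
  moreover have "sqrt D \<ge> 0" using D0 by simp
  ultimately have "Re (lam_plus d) < 0" "Re (lam_minus d) < 0" by linarith+
  then show ?thesis using dneg by simp
next
  case False
  have "Re (csqrt (complex_of_real (9*d^2 - 12*d - 2))) = 0"
    using False by (simp add: csqrt_of_real')
  then show ?thesis unfolding lam_plus_def lam_minus_def by auto
qed


theorem mainTheorem3:
  fixes \<phi> :: "2 \<Rightarrow> real poly" and d :: real
  assumes "is_P1_basis \<phi>" and "d \<in> {-1..1}"
  shows "complex_eigenvalues (matrix_inv (mass_mat \<phi>) ** (stiff_mat \<phi> - right_mat \<phi> + sb_mat \<phi> d))
           = {lam_plus d, lam_minus d}
       \<and> complex_eigenvalues (matrix_inv (mass_mat \<phi>) ** (stiff_mat \<phi> - right_mat \<phi>))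
           = {-2 + complex_of_real (sqrt 2) * \<i>, -2 - complex_of_real (sqrt 2) * \<i>}
       \<and> ((Re (lam_plus d) < 0 \<and> Re (lam_minus d) < 0) \<longleftrightarrow> d < 2/3)"
proof -
  define a where "a i = coeff (\<phi> i) 0" for i
  define b where "b i = coeff (\<phi> i) 1" for i
  have deg: "degree (\<phi> i) \<le> 1" for i using assms(1) unfolding is_P1_basis_def by blast
  have hp: "\<phi> i = [:a i, b i:]" for i unfolding a_def b_def by (rule deg1[OF deg])
  have span: "\<exists>c::2 \<Rightarrow> real. q = (\<Sum>i\<in>UNIV. smult (c i) (\<phi> i))" if "degree q \<le> 1" for q
    using assms(1) that unfolding is_P1_basis_def by blast
  obtain c where c: "[:1:] = (\<Sum>i\<in>UNIV. smult (c i) (\<phi> i))" using span[of "[:1:]"] by auto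
  obtain e where e: "[:0,1:] = (\<Sum>i\<in>UNIV. smult (e i) (\<phi> i))" using span[of "[:0,1:]"] by auto
  have c0: "c 1 * a 1 + c 2 * a 2 = 1" and c1: "c 1 * b 1 + c 2 * b 2 = 0"
    using arg_cong[OF c, of "\<lambda>p. coeff p 0"] arg_cong[OF c, of "\<lambda>p. coeff p 1"]
    by (simp_all add: sum_2 hp)
  have e0: "e 1 * a 1 + e 2 * a 2 = 0" and e1: "e 1 * b 1 + e 2 * b 2 = 1"
    using arg_cong[OF e, of "\<lambda>p. coeff p 0"] arg_cong[OF e, of "\<lambda>p. coeff p 1"]
    by (simp_all add: sum_2 hp)
  define \<delta> where "\<delta> = a 1 * b 2 - a 2 * b 1"
  have "(c 1 * e 2 - c 2 * e 1) * \<delta> = 1" unfolding \<delta>_def using c0 c1 e0 e1 by algebra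
  then have d0: "\<delta> \<noteq> 0" by auto
  have mass: "mass_mat \<phi> $ i $ j = a i * a j + (a i * b j + a j * b i)/2 + b i * b j/3" for i j
  proof -
    have "(\<lambda>x. poly (\<phi> i) x * poly (\<phi> j) x) = (\<lambda>x. a i * a j + (a i * b j + a j * b i) * x + b i * b j * x^2)"
      by (auto simp: hp algebra_simps power2_eq_square)
    then show ?thesis unfolding mass_mat_def by (simp add: int_quad)
  qed
  have stiff: "stiff_mat \<phi> $ i $ j = b i * a j + b i * b j / 2" for i j
  proof -
    have "(\<lambda>x. poly (pderiv (\<phi> i)) x * poly (\<phi> j) x) = (\<lambda>x. b i * a j + b i * b j * x + 0 * x^2)"
      by (auto simp: hp algebra_simps pderiv_pCons)
    then show ?thesis unfolding stiff_mat_def using int_quad[of "b i * a j" "b i * b j" 0] by simp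
  qed
  have right: "right_mat \<phi> $ i $ j = (a i + b i) * (a j + b j)" for i j
    unfolding right_mat_def by (simp add: hp)
  have sb: "sb_mat \<phi> d $ i $ j = - a i * (b j * d)" for i j
    unfolding sb_mat_def by (simp add: hp)
  have detM: "det (mass_mat \<phi>) = \<delta>^2 / 12"
    unfolding det_2 mass \<delta>_def by (simp add: field_simps power2_eq_square; algebra?)
  then have dM: "det (mass_mat \<phi>) \<noteq> 0" using d0 by (metis divide_eq_0_iff power_not_zero zero_neq_numeral)
  define A1 where "A1 = stiff_mat \<phi> - right_mat \<phi> + sb_mat \<phi> d"
  define A0 where "A0 = stiff_mat \<phi> - right_mat \<phi>"
  have A1e: "A1 $ i $ j = b i * a j + b i * b j / 2 - (a i + b i) * (a j + b j) - a i * (b j * d)" for i j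
    unfolding A1_def by (simp add: stiff right sb)
  have A0e: "A0 $ i $ j = b i * a j + b i * b j / 2 - (a i + b i) * (a j + b j)" for i j
    unfolding A0_def by (simp add: stiff right)
  let ?M = "mass_mat \<phi>"
  have t1: "(?M$2$2 * A1$1$1 - ?M$1$2 * A1$2$1 + ?M$1$1 * A1$2$2 - ?M$2$1 * A1$1$2) = (6*d - 4) * det ?M"
    unfolding detM unfolding mass A1e \<delta>_def by (simp add: field_simps power2_eq_square; algebra?)
  have dt1: "det A1 = 6 * det ?M"
    unfolding detM unfolding det_2 unfolding A1e \<delta>_def by (simp add: field_simps power2_eq_square; algebra?)
  have t0: "(?M$2$2 * A0$1$1 - ?M$1$2 * A0$2$1 + ?M$1$1 * A0$2$2 - ?M$2$1 * A0$1$2) = (-4) * det ?M"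
    unfolding detM unfolding mass A0e \<delta>_def by (simp add: field_simps power2_eq_square; algebra?)
  have dt0: "det A0 = 6 * det ?M"
    unfolding detM unfolding det_2 unfolding A0e \<delta>_def by (simp add: field_simps power2_eq_square; algebra?)
  have E1: "complex_eigenvalues (matrix_inv ?M ** A1) = {lam_plus d, lam_minus d}"
    unfolding eig2 key2[OF dM] t1 dt1 nonzero_mult_div_cancel_right[OF dM] of_real_numeral roots_quad by blast
  have E0: "complex_eigenvalues (matrix_inv ?M ** A0) =
     {-2 + complex_of_real (sqrt 2) * \<i>, -2 - complex_of_real (sqrt 2) * \<i>}"
    unfolding eig2 key2[OF dM] t0 dt0 nonzero_mult_div_cancel_right[OF dM] of_real_numeral roots_int by blast
  show ?thesis using E1 E0 stab[OF assms(2)] unfolding A1_def A0_def by blast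
qed

end
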